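(* Let $f:\mathbb{R}^d\to\mathbb{R}$ be convex and $G$-Lipschitz, and let $\nabla f(x)$ denote a subgradient of $f$ at $x$. Let $R>0$, $\gamma=G/R$, and $\hat\beta_k=1/(k+1)^{\overline{-1/2}}$ for $k\ge0$. Consider the dual averaging method with $x_0=0$, $s_0=0$ and, for $k\ge 0$, $$s_{k+1}=s_k+\nabla f(x_k),\qquad x_{k+1}=\arg\min_{x\in\mathbb{R}^d}\left\{\langle s_{k+1},x\rangle+\hat\beta_{k+1}\frac{\gamma}{2}\|x-x_0\|^2\right\}.$$ Then for every $n\ge 0$, $$\max_{x:\,\|x\|\le R}\left\{\frac{1}{n+1}\sum_{i=0}^{n}\langle\nabla f(x_i),x_i-x\rangle\right\}\le 2RG\,(n+2)^{\overline{-1/2}}<\frac{2RG}{\sqrt{n+1}}.$$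
   Context: Factorial powers: for real $x>0$ and real $r$ with $x+r>0$, $x^{\overline{r}}:=\Gamma(x+r)/\Gamma(x)$, where $\Gamma$ is the Gamma function. *)

theory Defs
  imports "HOL-Analysis.Analysis"
begin

text \<open>Rising factorial power with real exponent:
  x^{overline r} = Gamma(x + r) / Gamma(x), meant for x > 0 and x + r > 0.\<close>
definition fpow :: "real \<Rightarrow> real \<Rightarrow> real" where
  "fpow x r = Gamma (x + r) / Gamma x"

definition beta_hat :: "nat \<Rightarrow> real" where
  "beta_hat k = 1 / fpow (real k + 1) (-1/2)"

end

theory Submission
  imports Defs
begin

lemma alg1: assumes "(t::real) \<ge> 0" "c>0" "h>0" shows "c/h \<le> ((t+1)*c)/((t+1/2)*h)"
proof -
  have "(t+1)*c/((t+1/2)*h) = (c/h) * ((t+1)/(t+1/2))" by (metis times_divide_times_eq mult.commute)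
  moreover have "(t+1)/(t+1/2) \<ge> 1" using assms by simp
  moreover have "c/h > 0" using assms by simp
  ultimately show ?thesis by (metis mult.right_neutral mult_left_mono less_imp_le)
qed
lemma alg2: assumes "(t::real) \<ge> 0" "C>0" shows "2*A/C + A/((t+1)*C) = 2*((t+3/2)*A)/((t+1)*C)"
proof -
  have "t + 1 \<noteq> 0" using assms by simp
  hence "(t+1)*(2*A)/((t+1)*C) = 2*A/C" by (rule nonzero_mult_divide_mult_cancel_left)
  hence "2*A/C + A/((t+1)*C) = ((t+1)*(2*A) + A)/((t+1)*C)" by (simp add: add_divide_distrib)
  also have "(t+1)*(2*A) + A = 2*((t+3/2)*A)" by (simp add: algebra_simps)
  finally show ?thesis .
qed

lemma Gp1: "(a::real) > 0 \<Longrightarrow> Gamma (a + 1) = a * Gamma a"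
  by (intro Gamma_plus1) (auto elim!: nonpos_Ints_cases)

lemma G_half: assumes "(a::real) > 0" shows "Gamma (a + 1/2)^2 \<le> Gamma a * Gamma (a+1)"
proof -
  have "(ln \<circ> Gamma) ((1 - 1/2) *\<^sub>R a + (1/2) *\<^sub>R (a+1)) \<le> (1 - 1/2) * (ln \<circ> Gamma) a + (1/2) * (ln \<circ> Gamma) (a+1)"
    by (rule convex_onD[OF log_convex_Gamma_real]) (use assms in auto)
  moreover have "(1 - 1/2) *\<^sub>R a + (1/2) *\<^sub>R (a+1) = a + 1/2" by (simp add: field_simps)
  ultimately have "2 * ln (Gamma (a + 1/2)) \<le> ln (Gamma a) + ln (Gamma (a+1))"
    by simp
  moreover have "ln (Gamma (a + 1/2)^2) = 2 * ln (Gamma (a + 1/2))"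
    using assms by (simp add: ln_realpow)
  moreover have "ln (Gamma a * Gamma (a+1)) = ln (Gamma a) + ln (Gamma (a+1))"
    using assms by (intro ln_mult_pos) auto
  ultimately have "ln (Gamma (a + 1/2)^2) \<le> ln (Gamma a * Gamma (a+1))" by simp
  moreover have "Gamma (a + 1/2) > 0" using assms by (intro Gamma_real_pos) auto
  hence "Gamma (a + 1/2)^2 > 0" by simp
  moreover have "Gamma a * Gamma (a+1) > 0" using assms by auto
  ultimately show ?thesis using ln_le_cancel_iff by blast
qed

lemma G_strict: assumes "(a::real) > 0" shows "Gamma (a + 1/2)^2 < Gamma a * Gamma (a+1)"
proof -
  have h: "Gamma (a + 1 + 1/2)^2 \<le> Gamma (a+1) * Gamma (a+1+1)" using G_half[of "a+1"] assms by simp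
  have e1: "Gamma (a + 1 + 1/2) = (a+1/2) * Gamma (a+1/2)" using Gp1[of "a+1/2"] assms by (simp add: add_ac)
  have e2: "Gamma (a+1+1) = (a+1) * Gamma (a+1)" using Gp1[of "a+1"] assms by simp
  have e3: "Gamma (a+1) = a * Gamma a" using Gp1 assms by simp
  have pos: "Gamma a > 0" "Gamma (a+1/2) > 0" using assms by auto
  have X: "(a+1/2)^2 * Gamma (a+1/2)^2 \<le> (a * (a+1)) * (a * Gamma a * Gamma a)"
    using h unfolding e1 e2 e3 by (simp add: power_mult_distrib power2_eq_square algebra_simps)
  have c: "a * (a+1) < (a+1/2)^2" by (simp add: power2_eq_square algebra_simps)
  have "a * (a+1) * Gamma (a+1/2)^2 < (a+1/2)^2 * Gamma (a+1/2)^2"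
    using c pos by (intro mult_strict_right_mono) auto
  with X have "(a * (a+1)) * Gamma (a+1/2)^2 < (a * (a+1)) * (a * Gamma a * Gamma a)" by linarith
  hence "Gamma (a+1/2)^2 < a * Gamma a * Gamma a" using assms
    by (subst (asm) mult_less_cancel_left_pos) auto
  thus ?thesis unfolding e3 by (simp add: algebra_simps)
qed

lemma quad_id:
  fixes s y :: "'a::real_inner"
  assumes "b > 0"
  shows "s \<bullet> y + b/2 * (norm y)^2 = b/2 * (norm (y + (1/b) *\<^sub>R s))^2 - (norm s)^2/(2*b)"
  using assms by (simp add: power2_norm_eq_inner inner_add_left inner_add_right inner_commute field_simps)

lemma fpow_k: "fpow (real k + 1) (-1/2) = Gamma (real k + 1/2) / Gamma (real k + 1)"
proof -
  have "real k + 1 + -1/2 = real k + 1/2" by simp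
  thus ?thesis by (simp only: fpow_def)
qed

lemma beta_k: "beta_hat k = Gamma (real k + 1) / Gamma (real k + 1/2)"
proof -
  have "\<And>a b::real. 1/(a/b) = b/a" by simp
  thus ?thesis unfolding beta_hat_def fpow_k by this
qed

lemma beta_pos: "beta_hat k > 0"
  unfolding beta_k by (intro divide_pos_pos Gamma_real_pos) auto

lemma beta_mono: "beta_hat k \<le> beta_hat (Suc k)"
proof -
  have e1: "Gamma (real (Suc k) + 1) = (real k + 1) * Gamma (real k + 1)"
    using Gp1[of "real k + 1"] by (simp add: add_ac)
  have e2: "Gamma (real (Suc k) + 1/2) = (real k + 1/2) * Gamma (real k + 1/2)"
    using Gp1[of "real k + 1/2"] by (simp add: add_ac)
  have p: "Gamma (real k + 1) > 0" "Gamma (real k + 1/2) > 0" by auto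
  have t: "real k + 1/2 > 0" "real k + 1 > 0" by auto
  have alg: "\<And>c h. c > 0 \<Longrightarrow> h > 0 \<Longrightarrow> c / h \<le> ((real k + 1) * c) / ((real k + 1/2) * h)"
    by (rule alg1) auto
  have "Gamma (real k + 1) / Gamma (real k + 1/2) \<le> ((real k + 1) * Gamma (real k + 1)) / ((real k + 1/2) * Gamma (real k + 1/2))"
    using p by (rule alg)
  thus ?thesis unfolding beta_k e1 e2 .
qed

lemma sum_p: "(\<Sum>i\<le>n. Gamma (real i + 1/2) / Gamma (real i + 1)) = 2 * Gamma (real n + 3/2) / Gamma (real n + 1)"
proof (induction n)
  case 0
  have "Gamma (3/2::real) = 1/2 * Gamma (1/2)" using Gp1[of "1/2"] by simp
  thus ?case by simp
next
  case (Suc n)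
  have e1: "Gamma (real (Suc n) + 1) = (real n + 1) * Gamma (real n + 1)"
    using Gp1[of "real n + 1"] by (simp add: add_ac)
  have e2: "Gamma (real (Suc n) + 1/2) = Gamma (real n + 3/2)"
    by (simp add: add_ac)
  have e3: "Gamma (real (Suc n) + 3/2) = (real n + 3/2) * Gamma (real n + 3/2)"
    using Gp1[of "real n + 3/2"] by (simp add: add_ac)
  have p: "Gamma (real n + 1) > 0" "Gamma (real n + 3/2) > 0" by auto
  have t: "real n + 1 > 0" by auto
  have alg: "\<And>A C. C > 0 \<Longrightarrow> 2*A/C + A/((real n+1)*C) = 2*((real n+3/2)*A)/((real n+1)*C)"
    by (rule alg2) auto
  show ?case unfolding sum.atMost_Suc Suc e1 e2 e3 using p(1) by (rule alg)
qed
theorem theorem8: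
  fixes f :: "real ^ 'd \<Rightarrow> real"
    and g :: "real ^ 'd \<Rightarrow> real ^ 'd"
    and G R :: real
    and x s :: "nat \<Rightarrow> real ^ 'd"
    and n :: nat
  assumes conv: "convex_on UNIV f"
    and lip: "\<And>u v. \<bar>f u - f v\<bar> \<le> G * norm (u - v)"
    and Gpos: "G > 0"
    and subgrad: "\<And>u v. f v \<ge> f u + g u \<bullet> (v - u)"
    and Rpos: "R > 0"
    and x0: "x 0 = 0"
    and s0: "s 0 = 0"
    and s_step: "\<And>k. s (Suc k) = s k + g (x k)"
    and x_step: "\<And>k y. s (Suc k) \<bullet> x (Suc k)
                     + beta_hat (Suc k) * ((G / R) / 2) * (norm (x (Suc k) - x 0))\<^sup>2
                   \<le> s (Suc k) \<bullet> y + beta_hat (Suc k) * ((G / R) / 2) * (norm (y - x 0))\<^sup>2"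
  shows "(\<forall>y. norm y \<le> R \<longrightarrow>
            (1 / real (n + 1)) * (\<Sum>i\<le>n. g (x i) \<bullet> (x i - y))
              \<le> 2 * R * G * fpow (real n + 2) (-1/2))
         \<and> 2 * R * G * fpow (real n + 2) (-1/2) < 2 * R * G / sqrt (real n + 1)"
proof -
  define b where "b k = beta_hat k * (G / R)" for k
  have bpos: "b k > 0" for k unfolding b_def using beta_pos Gpos Rpos by simp
  have bmono: "b k \<le> b (Suc k)" for k unfolding b_def
    by (rule mult_right_mono[OF beta_mono]) (use Gpos Rpos in simp)
  have gb: "norm (g u) \<le> G" for u
  proof -
    have "f (u + g u) \<ge> f u + g u \<bullet> g u" using subgrad[of u "u + g u"] by simp
    moreover have "f (u + g u) - f u \<le> G * norm (g u)" using lip[of "u + g u" u] by simp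
    ultimately have "norm (g u) * norm (g u) \<le> G * norm (g u)"
      by (simp add: power2_norm_eq_inner[symmetric] power2_eq_square)
    thus ?thesis using Gpos
      by (cases "norm (g u) = 0") (auto intro: mult_right_le_imp_le)
  qed
  have xk: "x k = - (1 / b k) *\<^sub>R s k" for k
  proof (cases k)
    case 0 then show ?thesis using x0 s0 by simp
  next
    case (Suc j)
    let ?z = "- (1 / b (Suc j)) *\<^sub>R s (Suc j)"
    have "s (Suc j) \<bullet> x (Suc j) + b (Suc j) / 2 * (norm (x (Suc j)))\<^sup>2
          \<le> s (Suc j) \<bullet> ?z + b (Suc j) / 2 * (norm ?z)\<^sup>2"
      using x_step[of j ?z] x0 unfolding b_def by (simp add: mult.assoc)
    hence "b (Suc j)/2 * (norm (x (Suc j) + (1 / b (Suc j)) *\<^sub>R s (Suc j)))\<^sup>2 \<le>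
           b (Suc j)/2 * (norm (?z + (1 / b (Suc j)) *\<^sub>R s (Suc j)))\<^sup>2"
      unfolding quad_id[OF bpos] by simp
    hence "b (Suc j)/2 * (norm (x (Suc j) + (1 / b (Suc j)) *\<^sub>R s (Suc j)))\<^sup>2 \<le> 0" by simp
    hence "(norm (x (Suc j) + (1 / b (Suc j)) *\<^sub>R s (Suc j)))\<^sup>2 \<le> 0"
      using bpos[of "Suc j"] by (simp add: mult_le_0_iff)
    hence "x (Suc j) + (1 / b (Suc j)) *\<^sub>R s (Suc j) = 0" by simp
    thus ?thesis using Suc by (simp add: eq_neg_iff_add_eq_0)
  qed
  have sk: "s k = - b k *\<^sub>R x k" for k
    using xk[of k] bpos[of k] by simp
  define V where "V k = (norm (s k))\<^sup>2 / (2 * b k)" for k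
  have Vstep: "V (Suc k) \<le> V k - g (x k) \<bullet> x k + (norm (g (x k)))\<^sup>2 / (2 * b k)" for k
  proof -
    have N: "(norm (s (Suc k)))\<^sup>2 = (norm (s k))\<^sup>2 - 2 * b k * (g (x k) \<bullet> x k) + (norm (g (x k)))\<^sup>2"
      unfolding s_step power2_norm_eq_inner
      by (simp add: sk[of k] inner_add_left inner_add_right inner_commute algebra_simps)
    have "V (Suc k) \<le> (norm (s (Suc k)))\<^sup>2 / (2 * b k)"
      unfolding V_def using bpos[of k] bmono[of k]
      by (intro divide_left_mono) auto
    also have "\<dots> = V k - g (x k) \<bullet> x k + (norm (g (x k)))\<^sup>2 / (2 * b k)"
      unfolding N V_def using bpos[of k] by (simp add: field_simps)
    finally show ?thesis .
  qed
  have Vsum: "V (Suc m) \<le> - (\<Sum>i\<le>m. g (x i) \<bullet> x i) + (\<Sum>i\<le>m. (norm (g (x i)))\<^sup>2 / (2 * b i))" for m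
  proof (induction m)
    case 0 then show ?case using Vstep[of 0] by (simp add: V_def s0)
  next
    case (Suc m) then show ?case using Vstep[of "Suc m"] by simp
  qed
  have ssum: "s (Suc m) = (\<Sum>i\<le>m. g (x i))" for m
    by (induction m) (simp_all add: s_step s0)
  define A where "A = Gamma (real n + 3/2)"
  define C where "C = Gamma (real n + 1)"
  have Apos: "A > 0" and Cpos: "C > 0" unfolding A_def C_def by auto
  have bS: "beta_hat (Suc n) = (real n + 1) * C / A"
  proof -
    have "Gamma (real (Suc n) + 1) = (real n + 1) * C"
      unfolding C_def using Gp1[of "real n + 1"] by (simp add: add_ac)
    moreover have "Gamma (real (Suc n) + 1/2) = A" unfolding A_def by (simp add: add_ac)
    ultimately show ?thesis unfolding beta_k by simp
  qed
  have sp: "(\<Sum>i\<le>n. 1 / beta_hat i) = 2 * A / C"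
    unfolding A_def C_def sum_p[symmetric] beta_k by simp
  have fp: "fpow (real n + 2) (-1/2) = A / ((real n + 1) * C)"
  proof -
    have e1: "real n + 2 + -1/2 = real n + 3/2" by simp
    have e2: "Gamma (real n + 2) = (real n + 1) * C"
      unfolding C_def using Gp1[of "real n + 1"] by (simp add: add_ac)
    show ?thesis by (simp only: fpow_def A_def e1 e2)
  qed
  have key: "(real n + 1) * C * C \<le> 2 * A * A"
  proof -
    have h: "Gamma (real n + 1/2 + 1/2)^2 \<le> Gamma (real n + 1/2) * Gamma (real n + 1/2 + 1)"
      by (rule G_half) auto
    have e: "Gamma (real n + 1/2 + 1) = (real n + 1/2) * Gamma (real n + 1/2)"
      by (rule Gp1) auto
    have e2: "real n + 1/2 + 1/2 = real n + 1" "real n + 1/2 + 1 = real n + 3/2" by simp_all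
    have h2: "C * C \<le> Gamma (real n + 1/2) * A"
      using h unfolding A_def C_def e2 by (simp add: power2_eq_square)
    have e3: "A = (real n + 1/2) * Gamma (real n + 1/2)" unfolding A_def using e e2 by simp
    have "(real n + 1/2) * (C * C) \<le> (real n + 1/2) * (Gamma (real n + 1/2) * A)"
      using h2 by (intro mult_left_mono) auto
    moreover have "(real n + 1/2) * (Gamma (real n + 1/2) * A) = A * A" by (metis e3 mult.assoc)
    ultimately have "(real n + 1/2) * (C * C) \<le> A * A" by simp
    moreover have "(real n + 1) * (C * C) \<le> (2 * real n + 1) * (C * C)"
      by (intro mult_right_mono) auto
    moreover have "(2 * real n + 1) * (C * C) = 2 * ((real n + 1/2) * (C * C))"
      by (simp add: algebra_simps)
    ultimately have "(real n + 1) * (C * C) \<le> 2 * (A * A)" by linarith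
    thus ?thesis by (simp add: algebra_simps)
  qed
  have bound: "(\<Sum>i\<le>n. g (x i) \<bullet> (x i - y)) \<le> G * R / 2 * (2 * A / C + (real n + 1) * C / A)"
    if y: "norm y \<le> R" for y
  proof -
    have S: "(\<Sum>i\<le>n. g (x i) \<bullet> (x i - y)) = (\<Sum>i\<le>n. g (x i) \<bullet> x i) - s (Suc n) \<bullet> y"
      unfolding ssum by (simp add: inner_diff_right sum_subtractf inner_sum_left)
    have q: "- (s (Suc n) \<bullet> y) \<le> V (Suc n) + b (Suc n) / 2 * (norm y)\<^sup>2"
    proof -
      have "0 \<le> b (Suc n) / 2 * (norm (y + (1 / b (Suc n)) *\<^sub>R s (Suc n)))\<^sup>2"
        using bpos[of "Suc n"] by simp
      thus ?thesis using quad_id[OF bpos[of "Suc n"], of "s (Suc n)" y] unfolding V_def by linarith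
    qed
    have g2: "(norm (g (x i)))\<^sup>2 / (2 * b i) \<le> G * R / 2 * (1 / beta_hat i)" for i
    proof -
      have "(norm (g (x i)))\<^sup>2 \<le> G\<^sup>2" using gb[of "x i"] by (simp add: power_mono)
      hence "(norm (g (x i)))\<^sup>2 / (2 * b i) \<le> G\<^sup>2 / (2 * b i)"
        using bpos[of i] by (intro divide_right_mono) auto
      also have "\<dots> = G * R / 2 * (1 / beta_hat i)"
        unfolding b_def using Gpos Rpos beta_pos[of i] by (simp add: field_simps power2_eq_square)
      finally show ?thesis .
    qed
    have sg: "(\<Sum>i\<le>n. (norm (g (x i)))\<^sup>2 / (2 * b i)) \<le> G * R / 2 * (2 * A / C)"
      unfolding sp[symmetric] sum_distrib_left by (rule sum_mono) (rule g2)
    have yb: "b (Suc n) / 2 * (norm y)\<^sup>2 \<le> b (Suc n) / 2 * R\<^sup>2"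
      using bpos[of "Suc n"] y by (intro mult_left_mono power_mono) auto
    have bb: "b (Suc n) / 2 * R\<^sup>2 = G * R / 2 * ((real n + 1) * C / A)"
      unfolding b_def bS using Rpos Apos by (simp add: field_simps power2_eq_square)
    have dist: "G * R / 2 * (2 * A / C + (real n + 1) * C / A) = G * R / 2 * (2 * A / C) + G * R / 2 * ((real n + 1) * C / A)"
      by (rule distrib_left)
    show ?thesis using S q Vsum[of n] sg yb bb dist by linarith
  qed
  have fin: "G * R / 2 * (2 * A / C + (real n + 1) * C / A) \<le> (real n + 1) * (2 * R * G * (A / ((real n + 1) * C)))"
  proof -
    have "(real n + 1) * C / A \<le> 2 * A / C"
    proof -
      have e1: "(real n + 1) * C / A = ((real n + 1) * C * C) / (A * C)" using Cpos by simp
      have e2: "2 * A / C = (2 * A * A) / (A * C)" using Apos by simp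
      show ?thesis unfolding e1 e2 using key Apos Cpos by (intro divide_right_mono) auto
    qed
    hence "G * R / 2 * (2 * A / C + (real n + 1) * C / A) \<le> G * R / 2 * (2 * A / C + 2 * A / C)"
      using Gpos Rpos by (intro mult_left_mono) auto
    also have "\<dots> = 2 * R * G * (A / C)" by (simp add: algebra_simps)
    also have "\<dots> = (real n + 1) * (2 * R * G * (A / ((real n + 1) * C)))"
    proof -
      have t: "real n + 1 \<noteq> 0" by simp
      have "(real n + 1) * (A / ((real n + 1) * C)) = ((real n + 1) * A) / ((real n + 1) * C)" by simp
      also have "\<dots> = A / C" using t by (rule nonzero_mult_divide_mult_cancel_left)
      finally have h: "(real n + 1) * (A / ((real n + 1) * C)) = A / C" .
      show ?thesis by (metis h mult.left_commute)
    qed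
    finally show ?thesis .
  qed
  have part1: "\<forall>y. norm y \<le> R \<longrightarrow>
            (1 / real (n + 1)) * (\<Sum>i\<le>n. g (x i) \<bullet> (x i - y))
              \<le> 2 * R * G * fpow (real n + 2) (-1/2)"
  proof (intro allI impI)
    fix y :: "real ^ 'd" assume "norm y \<le> R"
    hence "(\<Sum>i\<le>n. g (x i) \<bullet> (x i - y)) \<le> (real n + 1) * (2 * R * G * fpow (real n + 2) (-1/2))"
      using bound[OF \<open>norm y \<le> R\<close>] fin unfolding fp by linarith
    hence "(1 / real (n + 1)) * (\<Sum>i\<le>n. g (x i) \<bullet> (x i - y)) \<le> (1 / real (n + 1)) * ((real n + 1) * (2 * R * G * fpow (real n + 2) (-1/2)))"
      by (intro mult_left_mono) auto
    also have "\<dots> = 2 * R * G * fpow (real n + 2) (-1/2)"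
    proof -
      have e: "real (n + 1) = real n + 1" by simp
      have gen: "\<And>t Z::real. t \<noteq> 0 \<Longrightarrow> 1 / t * (t * Z) = Z" by simp
      show ?thesis unfolding e by (rule gen) simp
    qed
    finally show "(1 / real (n + 1)) * (\<Sum>i\<le>n. g (x i) \<bullet> (x i - y)) \<le> 2 * R * G * fpow (real n + 2) (-1/2)" .
  qed
  have part2: "A / ((real n + 1) * C) < 1 / sqrt (real n + 1)"
  proof -
    have h: "Gamma (real n + 1 + 1/2)^2 < Gamma (real n + 1) * Gamma (real n + 1 + 1)"
      by (rule G_strict) auto
    have e1: "real n + 1 + 1/2 = real n + 3/2" by simp
    have e2: "Gamma (real n + 1 + 1) = (real n + 1) * C" unfolding C_def by (rule Gp1) auto
    have "A^2 < (real n + 1) * C^2" using h unfolding e1 e2 A_def C_def by (simp add: power2_eq_square algebra_simps)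
    also have "\<dots> = (sqrt (real n + 1) * C)^2" by (simp add: power_mult_distrib)
    finally have sq: "A^2 < (sqrt (real n + 1) * C)^2" .
    have "A < sqrt (real n + 1) * C"
      by (rule power2_less_imp_less[OF sq]) (use Cpos in simp)
    hence "A * sqrt (real n + 1) < sqrt (real n + 1) * C * sqrt (real n + 1)"
      by (intro mult_strict_right_mono) auto
    also have "\<dots> = (sqrt (real n + 1) * sqrt (real n + 1)) * C" by (simp only: ac_simps)
    also have "\<dots> = (real n + 1) * C" by simp
    finally have lt: "A * sqrt (real n + 1) < (real n + 1) * C" .
    have sp: "sqrt (real n + 1) > 0" by simp
    have d: "(real n + 1) * C * sqrt (real n + 1) > 0" using Cpos sp by simp
    have "A / ((real n + 1) * C) = (A * sqrt (real n + 1)) / ((real n + 1) * C * sqrt (real n + 1))"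
      using sp by simp
    also have "\<dots> < ((real n + 1) * C) / ((real n + 1) * C * sqrt (real n + 1))"
      using lt d by (rule divide_strict_right_mono)
    also have "\<dots> = 1 / sqrt (real n + 1)" using Cpos by simp
    finally show ?thesis .
  qed
  have "2 * R * G * fpow (real n + 2) (-1/2) < 2 * R * G / sqrt (real n + 1)"
  proof -
    have "2 * R * G > 0" using Rpos Gpos by simp
    hence "2 * R * G * (A / ((real n + 1) * C)) < 2 * R * G * (1 / sqrt (real n + 1))"
      using part2 by (rule mult_strict_left_mono[rotated])
    thus ?thesis unfolding fp by simp
  qed
  with part1 show ?thesis by blast
qed

end
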